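(* Let $K$ be a finite subset of $\mathbb{R}^3$. Then $K^{cc}\subset K^{rc}$.
   Context: A horizontal segment/line is one contained in a plane $\{z=c\}$; a vertical segment/line is one parallel to the $z$ axis. A $2+1$-complex is a closed subset of $\mathbb{R}^3$ that is the union of a finite list $L$ of elements, each of one of the following kinds: points; relatively open horizontal segments whose two endpoints belong to $L$; relatively open vertical segments whose two endpoints belong to $L$; relatively open triangles in a horizontal plane whose three boundary segments belong to $L$; relatively open rectangles in a vertical plane, two of whose sides are parallel to the $z$ axis, whose four boundary segments belong to $L$; open subsets of $\mathbb{R}^3$ whose boundary is a union of elements of the previous kinds, all belonging to $L$. For $M\subset\mathbb{R}^3$, a point $p\in M$ is extremal if no relatively open horizontal or vertical segment contained in $M$ contains $p$; $Extr(M)$ is the set of extremal points. $K^{cc}=\bigcup\{L: L\text{ a } 2+1\text{-complex with } Extr(L)\subset K\}$. A function $f:\mathbb{R}^3\to\mathbb{R}$ is $2+1$-convex if its restriction to every horizontal and every vertical line is convex; $K^{rc}=\{x: f(x)\le\sup_K f\text{ for every } 2+1\text{-convex } f\}$. *)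

theory Defs
  imports "HOL-Analysis.Analysis"
begin

text \<open>Points of R^3 are vectors of type real^3; the z-coordinate is component 3.\<close>

definition e3 :: "real^3" where "e3 = axis 3 1"

definition hor_pair :: "real^3 \<Rightarrow> real^3 \<Rightarrow> bool" where
  "hor_pair a b \<longleftrightarrow> a \<noteq> b \<and> a$3 = b$3"

definition vert_pair :: "real^3 \<Rightarrow> real^3 \<Rightarrow> bool" where
  "vert_pair a b \<longleftrightarrow> a \<noteq> b \<and> a$1 = b$1 \<and> a$2 = b$2"

definition point_el :: "(real^3) set \<Rightarrow> bool" where
  "point_el E \<longleftrightarrow> (\<exists>p. E = {p})"

definition hseg_el :: "(real^3) set set \<Rightarrow> (real^3) set \<Rightarrow> bool" where
  "hseg_el L E \<longleftrightarrow> (\<exists>a b. hor_pair a b \<and> E = open_segment a b \<and> {a} \<in> L \<and> {b} \<in> L)"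

definition vseg_el :: "(real^3) set set \<Rightarrow> (real^3) set \<Rightarrow> bool" where
  "vseg_el L E \<longleftrightarrow> (\<exists>a b. vert_pair a b \<and> E = open_segment a b \<and> {a} \<in> L \<and> {b} \<in> L)"

definition htri_el :: "(real^3) set set \<Rightarrow> (real^3) set \<Rightarrow> bool" where
  "htri_el L E \<longleftrightarrow> (\<exists>a b c. a$3 = b$3 \<and> b$3 = c$3 \<and> \<not> collinear {a, b, c} \<and>
      E = rel_interior (convex hull {a, b, c}) \<and>
      open_segment a b \<in> L \<and> open_segment b c \<in> L \<and> open_segment a c \<in> L)"

definition vrect_el :: "(real^3) set set \<Rightarrow> (real^3) set \<Rightarrow> bool" where
  "vrect_el L E \<longleftrightarrow> (\<exists>p q h. hor_pair p q \<and> h > 0 \<and>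
      E = {p + s *\<^sub>R (q - p) + t *\<^sub>R (h *\<^sub>R e3) | s t. 0 < s \<and> s < 1 \<and> 0 < t \<and> t < 1} \<and>
      open_segment p q \<in> L \<and> open_segment (p + h *\<^sub>R e3) (q + h *\<^sub>R e3) \<in> L \<and>
      open_segment p (p + h *\<^sub>R e3) \<in> L \<and> open_segment q (q + h *\<^sub>R e3) \<in> L)"

definition lowdim_el :: "(real^3) set set \<Rightarrow> (real^3) set \<Rightarrow> bool" where
  "lowdim_el L E \<longleftrightarrow> point_el E \<or> hseg_el L E \<or> vseg_el L E \<or> htri_el L E \<or> vrect_el L E"

definition open_el :: "(real^3) set set \<Rightarrow> (real^3) set \<Rightarrow> bool" where
  "open_el L E \<longleftrightarrow> open E \<and> bounded E \<and>
      (\<exists>S. S \<subseteq> L \<and> (\<forall>F\<in>S. lowdim_el L F) \<and> frontier E = \<Union>S)"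

definition complex21 :: "(real^3) set \<Rightarrow> bool" where
  "complex21 C \<longleftrightarrow> closed C \<and>
     (\<exists>L. finite L \<and> (\<forall>E\<in>L. lowdim_el L E \<or> open_el L E) \<and> C = \<Union>L)"

definition Extr :: "(real^3) set \<Rightarrow> (real^3) set" where
  "Extr M = {p \<in> M. \<not> (\<exists>a b. (hor_pair a b \<or> vert_pair a b) \<and>
                          open_segment a b \<subseteq> M \<and> p \<in> open_segment a b)}"

definition Kcc :: "(real^3) set \<Rightarrow> (real^3) set" where
  "Kcc K = \<Union>{C. complex21 C \<and> Extr C \<subseteq> K}"

definition convex21 :: "(real^3 \<Rightarrow> real) \<Rightarrow> bool" where
  "convex21 f \<longleftrightarrow>
     (\<forall>x d. d \<noteq> 0 \<and> d$3 = 0 \<longrightarrow> convex_on UNIV (\<lambda>t::real. f (x + t *\<^sub>R d))) \<and>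
     (\<forall>x. convex_on UNIV (\<lambda>t::real. f (x + t *\<^sub>R e3)))"

definition Krc :: "(real^3) set \<Rightarrow> (real^3) set" where
  "Krc K = {x. \<forall>f. convex21 f \<longrightarrow> f x \<le> Sup (f ` K)}"

end

theory Submission
  imports Defs
begin

definition dirconv :: "(real^3 \<Rightarrow> real) \<Rightarrow> real^3 \<Rightarrow> bool" where
  "dirconv f d \<longleftrightarrow> (\<forall>x. convex_on UNIV (\<lambda>t::real. f (x + t *\<^sub>R d)))"

lemma dirconv_scale:
  assumes "dirconv f d" shows "dirconv f (c *\<^sub>R d)"
  unfolding dirconv_def
proof (intro allI convex_onI convex_UNIV)
  fix x and v a b :: real
  assume h: "0 < v" "v < 1"
  have "f (x + ((1-v) * (a*c) + v * (b*c)) *\<^sub>R d) \<le> (1-v) * f (x + (a*c) *\<^sub>R d) + v * f (x + (b*c) *\<^sub>R d)"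
    using convex_onD[OF assms[unfolded dirconv_def, rule_format, of x], of v "a*c" "b*c"] h
    by simp
  then show "f (x + ((1 - v) *\<^sub>R a + v *\<^sub>R b) *\<^sub>R c *\<^sub>R d) \<le> (1 - v) * f (x + a *\<^sub>R c *\<^sub>R d) + v * f (x + b *\<^sub>R c *\<^sub>R d)"
    by (simp add: algebra_simps)
qed

lemma vec3_decomp: "(v::real^3) = v$1 *\<^sub>R axis 1 1 + v$2 *\<^sub>R axis 2 1 + v$3 *\<^sub>R axis 3 1"
  by (simp add: vec_eq_iff forall_3 axis_def)

lemma convex21_dirconv:
  assumes "convex21 f" "d$3 = 0 \<or> (d$1 = 0 \<and> d$2 = 0)"
  shows "dirconv f d"
proof (cases "d$3 = 0")
  case True
  show ?thesis
  proof (cases "d = 0")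
    case True then show ?thesis by (simp add: dirconv_def convex_on_const)
  next
    case False then show ?thesis using assms(1) \<open>d$3 = 0\<close> by (simp add: convex21_def dirconv_def)
  qed
next
  case False
  then have "d = d$3 *\<^sub>R e3" using assms(2) by (simp add: vec_eq_iff forall_3 axis_def e3_def)
  moreover have "dirconv f e3" using assms(1) by (simp add: convex21_def dirconv_def)
  ultimately show ?thesis by (metis dirconv_scale)
qed

lemma dirconv_mid:
  assumes "dirconv f d" shows "f (x + d) \<le> (f x + f (x + 2 *\<^sub>R d)) / 2"
  using convex_onD[OF assms[unfolded dirconv_def, rule_format, of x], of "1/2" 0 2]
  by simp

lemma dirconv_seg:
  assumes "dirconv f d" "0 \<le> t" "t \<le> 1" shows "f (x + t *\<^sub>R d) \<le> max (f x) (f (x + d))"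
proof -
  have "f (x + t *\<^sub>R d) \<le> (1 - t) * f x + t * f (x + d)"
    using convex_onD[OF assms(1)[unfolded dirconv_def, rule_format, of x], of t 0 1] assms by simp
  also have "\<dots> \<le> (1 - t) * max (f x) (f (x + d)) + t * max (f x) (f (x + d))"
    using assms by (intro add_mono mult_left_mono) auto
  finally show ?thesis by (simp add: algebra_simps)
qed

lemma addsc: "(y::real^3) + a *\<^sub>R d + b *\<^sub>R d = y + (a+b) *\<^sub>R d"
  by (simp add: scaleR_add_left add.assoc)

lemma dirconv_box:
  assumes "dirconv f d" "\<bar>t\<bar> \<le> R" shows "f (y + t *\<^sub>R d) \<le> max (f (y + (-R) *\<^sub>R d)) (f (y + R *\<^sub>R d))"
proof (cases "R = 0")
  case True then show ?thesis using assms by simp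
next
  case False
  then have R: "R > 0" using assms by auto
  have dc: "dirconv f ((2*R) *\<^sub>R d)" using assms(1) by (rule dirconv_scale)
  have "f ((y + (-R) *\<^sub>R d) + ((t+R)/(2*R)) *\<^sub>R ((2*R) *\<^sub>R d)) \<le>
        max (f (y + (-R) *\<^sub>R d)) (f ((y + (-R) *\<^sub>R d) + (2*R) *\<^sub>R d))"
    using dirconv_seg[OF dc, of "(t+R)/(2*R)" "y + (-R) *\<^sub>R d"] R assms(2) by (simp add: abs_le_iff)
  moreover have "(y + (-R) *\<^sub>R d) + ((t+R)/(2*R)) *\<^sub>R ((2*R) *\<^sub>R d) = y + t *\<^sub>R d"
  proof -
    have e: "(t+R)/(2*R) * (2*R) = t + R" using R by (simp add: field_simps)
    have "(y + (-R) *\<^sub>R d) + ((t+R)/(2*R)) *\<^sub>R ((2*R) *\<^sub>R d) = (y + (-R) *\<^sub>R d) + (t + R) *\<^sub>R d"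
      by (simp only: scaleR_scaleR e)
    moreover have "y + (-R) *\<^sub>R d + (t+R) *\<^sub>R d = y + t *\<^sub>R d" by (simp only: addsc) simp
    ultimately show ?thesis using R by simp
  qed
  moreover have "(y + (-R) *\<^sub>R d) + (2*R) *\<^sub>R d = y + R *\<^sub>R d"
    by (simp only: addsc) simp
  ultimately show ?thesis by (simp only:)
qed

lemma conv_lip:
  fixes \<phi> :: "real \<Rightarrow> real"
  assumes c: "convex_on UNIV \<phi>" and b: "\<And>s. \<bar>s\<bar> \<le> 1 \<Longrightarrow> \<bar>\<phi> s\<bar> \<le> B" and t: "\<bar>t\<bar> \<le> 1"
  shows "\<bar>\<phi> t - \<phi> 0\<bar> \<le> 2 * B * \<bar>t\<bar>"
proof (cases "t \<ge> 0")
  case True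
  have 1: "\<phi> t \<le> (1 - t) * \<phi> 0 + t * \<phi> 1"
    using convex_onD[OF c, of t 0 1] True t by simp
  have 2: "\<phi> 0 \<le> (1 - 1/(1+t)) * \<phi> (-1) + (1/(1+t)) * \<phi> t"
    using convex_onD[OF c, of "1/(1+t)" "-1" t] True t by (simp add: field_simps)
  have h2: "(1+t) * \<phi> 0 \<le> t * \<phi> (-1) + \<phi> t"
  proof -
    have "(1+t) * \<phi> 0 \<le> (1+t) * ((1 - 1/(1+t)) * \<phi> (-1) + (1/(1+t)) * \<phi> t)"
      using 2 True by (intro mult_left_mono) auto
    also have "\<dots> = t * \<phi> (-1) + \<phi> t"
    proof -
      have nz: "1 + t \<noteq> 0" using True by linarith
      have "(1+t) * (1 - 1/(1+t)) = t" "(1+t) * (1/(1+t)) = 1" using nz by (simp_all add: field_simps)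
      then show ?thesis using nz by (simp add: distrib_left mult.assoc[symmetric])
    qed
    finally show ?thesis .
  qed
  have "\<bar>\<phi> 1\<bar> \<le> B" "\<bar>\<phi> (-1)\<bar> \<le> B" "\<bar>\<phi> 0\<bar> \<le> B" using b by auto
  then have "t * \<phi> 1 \<le> t * B" "t * \<phi> (-1) \<le> t * B" "t * (- \<phi> 0) \<le> t * B"
    using True mult_left_mono[OF _ True] by (simp_all only: abs_le_iff)
  then show ?thesis using 1 h2 True by (simp add: abs_le_iff algebra_simps)
next
  case False
  let ?u = "-t"
  have T: "?u > 0" "?u \<le> 1" using False t by auto
  have 1: "\<phi> t \<le> (1 - ?u) * \<phi> 0 + ?u * \<phi> (-1)"
    using convex_onD[OF c, of ?u 0 "-1"] T by simp
  have 2: "\<phi> 0 \<le> (1 - 1/(1+?u)) * \<phi> 1 + (1/(1+?u)) * \<phi> t"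
    using convex_onD[OF c, of "1/(1+?u)" 1 t] T by (simp add: field_simps)
  have h2: "(1+?u) * \<phi> 0 \<le> ?u * \<phi> 1 + \<phi> t"
  proof -
    have "(1+?u) * \<phi> 0 \<le> (1+?u) * ((1 - 1/(1+?u)) * \<phi> 1 + (1/(1+?u)) * \<phi> t)"
      using 2 T by (intro mult_left_mono) auto
    also have "\<dots> = ?u * \<phi> 1 + \<phi> t"
    proof -
      have nz: "1 + ?u \<noteq> 0" using T by linarith
      have "(1+?u) * (1 - 1/(1+?u)) = ?u" "(1+?u) * (1/(1+?u)) = 1" using nz by (simp_all add: field_simps)
      then show ?thesis using nz by (simp add: distrib_left mult.assoc[symmetric])
    qed
    finally show ?thesis .
  qed
  have "\<bar>\<phi> 1\<bar> \<le> B" "\<bar>\<phi> (-1)\<bar> \<le> B" "\<bar>\<phi> 0\<bar> \<le> B" using b by auto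
  then have "?u * \<phi> 1 \<le> ?u * B" "?u * \<phi> (-1) \<le> ?u * B" "?u * (- \<phi> 0) \<le> ?u * B"
    using T mult_left_mono[of _ _ ?u] by (simp_all only: abs_le_iff less_imp_le)
  moreover have "\<bar>t\<bar> = ?u" using T by simp
  ultimately show ?thesis using 1 h2 unfolding abs_le_iff by (simp only: algebra_simps) linarith
qed


definition inbox :: "real^3 \<Rightarrow> real \<Rightarrow> real^3 \<Rightarrow> bool" where
  "inbox p R q \<longleftrightarrow> \<bar>q$1 - p$1\<bar> \<le> R \<and> \<bar>q$2 - p$2\<bar> \<le> R \<and> \<bar>q$3 - p$3\<bar> \<le> R"

lemma dirs:
  assumes "convex21 f"
  shows "dirconv f (axis 1 1)" "dirconv f (axis 2 1)" "dirconv f (axis 3 1)"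
  using convex21_dirconv[OF assms] by (auto simp: axis_def)

lemma box_upper:
  assumes cf: "convex21 f" and R: "R \<ge> 0"
  shows "\<exists>B. \<forall>q. inbox p R q \<longrightarrow> f q \<le> B"
proof -
  define F where "F a b c = f (p + a *\<^sub>R axis 1 1 + b *\<^sub>R axis 2 1 + c *\<^sub>R axis 3 1)" for a b c
  define S where "S = {-R, R}"
  define B where "B = Max ((\<lambda>(a,b,c). F a b c) ` (S \<times> S \<times> S))"
  have fin: "finite ((\<lambda>(a,b,c). F a b c) ` (S \<times> S \<times> S))" by (simp add: S_def)
  have corner: "F a b c \<le> B" if "a \<in> S" "b \<in> S" "c \<in> S" for a b c
    unfolding B_def using that by (intro Max_ge[OF fin]) force
  have s3: "F a b c \<le> max (F a b (-R)) (F a b R)" if "\<bar>c\<bar> \<le> R" for a b c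
    unfolding F_def using dirconv_box[OF dirs(3)[OF cf] that] by simp
  have s2: "F a b c \<le> max (F a (-R) c) (F a R c)" if "\<bar>b\<bar> \<le> R" for a b c
  proof -
    have "\<And>b. F a b c = f ((p + a *\<^sub>R axis 1 1 + c *\<^sub>R axis 3 1) + b *\<^sub>R axis 2 1)"
      unfolding F_def by (simp add: algebra_simps)
    then show ?thesis using dirconv_box[OF dirs(2)[OF cf] that] by simp
  qed
  have s1: "F a b c \<le> max (F (-R) b c) (F R b c)" if "\<bar>a\<bar> \<le> R" for a b c
  proof -
    have "\<And>a. F a b c = f ((p + b *\<^sub>R axis 2 1 + c *\<^sub>R axis 3 1) + a *\<^sub>R axis 1 1)"
      unfolding F_def by (simp add: algebra_simps)
    then show ?thesis using dirconv_box[OF dirs(1)[OF cf] that] by simp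
  qed
  have h1: "F a b c \<le> B" if "\<bar>a\<bar> \<le> R" "b \<in> S" "c \<in> S" for a b c
    using s1[OF that(1), of b c] corner[of "-R" b c] corner[of R b c] that by (auto simp: S_def)
  have h2: "F a b c \<le> B" if "\<bar>a\<bar> \<le> R" "\<bar>b\<bar> \<le> R" "c \<in> S" for a b c
    using s2[OF that(2), of a c] h1[of a "-R" c] h1[of a R c] that by (auto simp: S_def)
  have h3: "F a b c \<le> B" if "\<bar>a\<bar> \<le> R" "\<bar>b\<bar> \<le> R" "\<bar>c\<bar> \<le> R" for a b c
    using s3[OF that(3), of a b] h2[of a b "-R"] h2[of a b R] that by (auto simp: S_def)
  have "f q \<le> B" if "inbox p R q" for q
  proof -
    have "q = p + (q - p)" by simp
    also have "\<dots> = p + (q-p)$1 *\<^sub>R axis 1 1 + (q-p)$2 *\<^sub>R axis 2 1 + (q-p)$3 *\<^sub>R axis 3 1"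
      by (subst vec3_decomp[of "q - p"]) (simp add: add.assoc)
    finally have "f q = F ((q-p)$1) ((q-p)$2) ((q-p)$3)" unfolding F_def by simp
    then show ?thesis using h3 that by (simp add: inbox_def)
  qed
  then show ?thesis by blast
qed


lemma box_bound:
  assumes cf: "convex21 f" and R: "R \<ge> 0"
  shows "\<exists>B. \<forall>q. inbox p R q \<longrightarrow> \<bar>f q\<bar> \<le> B"
proof -
  obtain B where B: "\<And>q. inbox p R q \<Longrightarrow> f q \<le> B" using box_upper[OF cf R] by blast
  have low: "f q \<ge> 4 * f p - 3 * B" if q: "inbox p R q" for q
  proof -
    define c where "c = p$3 - q$3"
    define r where "r = q + c *\<^sub>R e3"
    have v: "dirconv f (c *\<^sub>R e3)" using dirs(3)[OF cf] dirconv_scale unfolding e3_def by blast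
    have 1: "f r \<le> (f q + f (q + 2 *\<^sub>R (c *\<^sub>R e3))) / 2"
      unfolding r_def by (rule dirconv_mid[OF v])
    have "inbox p R (q + 2 *\<^sub>R (c *\<^sub>R e3))"
      using q by (simp add: inbox_def c_def e3_def axis_def abs_minus_commute)
    then have h1a: "f r \<le> (f q + B) / 2" using 1 B by fastforce
    define d where "d = p - r"
    have d3: "d$3 = 0" by (simp add: d_def r_def c_def e3_def axis_def)
    have h: "dirconv f d" using convex21_dirconv[OF cf] d3 by blast
    have 2: "f (r + d) \<le> (f r + f (r + 2 *\<^sub>R d)) / 2" by (rule dirconv_mid[OF h])
    have "r + d = p" by (simp add: d_def)
    moreover have "inbox p R (r + 2 *\<^sub>R d)"
      using q R by (simp add: inbox_def d_def r_def c_def e3_def axis_def abs_minus_commute)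
    ultimately have "f p \<le> (f r + B) / 2" using 2 B by fastforce
    then have "2 * f p \<le> f r + B" by simp
    moreover have "2 * f r \<le> f q + B" using h1a by simp
    ultimately show ?thesis by linarith
  qed
  have "\<bar>f q\<bar> \<le> max B (3 * B - 4 * f p)" if "inbox p R q" for q
    using B[OF that] low[OF that] by (simp add: abs_le_iff max_def)
  then show ?thesis by blast
qed

lemma step_lip:
  assumes "dirconv f d" "\<And>s. \<bar>s\<bar> \<le> 1 \<Longrightarrow> \<bar>f (y + s *\<^sub>R d)\<bar> \<le> B" "\<bar>t\<bar> \<le> 1"
  shows "\<bar>f (y + t *\<^sub>R d) - f y\<bar> \<le> 2 * B * \<bar>t\<bar>"
  using conv_lip[of "\<lambda>s. f (y + s *\<^sub>R d)" B t] assms unfolding dirconv_def by simp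

lemma convex21_cont:
  assumes cf: "convex21 f"
  shows "continuous_on UNIV f"
proof -
  have "continuous (at p) f" for p
  proof -
    obtain B where B: "\<And>q. inbox p 2 q \<Longrightarrow> \<bar>f q\<bar> \<le> B" using box_bound[OF cf, of 2 p] by auto
    have B0: "B \<ge> 0" using B[of p] by (simp add: inbox_def) 
    show ?thesis unfolding continuous_at_eps_delta
    proof (intro allI impI)
      fix \<epsilon> :: real assume e: "\<epsilon> > 0"
      define \<delta> where "\<delta> = min 1 (\<epsilon> / (6 * B + 1))"
      have dpos: "\<delta> > 0" using e B0 by (simp add: \<delta>_def)
      have "dist (f q) (f p) < \<epsilon>" if q: "dist q p < \<delta>" for q
      proof -
        define h where "h = q - p"
        have hn: "norm h < \<delta>" using q by (simp add: h_def dist_norm)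
        have hc: "\<bar>h$i\<bar> < \<delta>" for i using component_le_norm_cart[of h i] hn by linarith
        have hc1: "\<bar>h$i\<bar> \<le> 1" for i using hc[of i] by (simp add: \<delta>_def)
        define y1 where "y1 = p + h$1 *\<^sub>R axis 1 1"
        define y2 where "y2 = y1 + h$2 *\<^sub>R axis 2 1"
        have qy: "q = y2 + h$3 *\<^sub>R axis 3 1"
        proof -
          have "q = p + h" by (simp add: h_def)
          also have "p + h = p + h$1 *\<^sub>R axis 1 1 + h$2 *\<^sub>R axis 2 1 + h$3 *\<^sub>R axis 3 1"
            by (subst vec3_decomp[of h]) (simp add: add.assoc)
          finally show ?thesis by (simp add: y1_def y2_def)
        qed
        have st1: "\<bar>f y1 - f p\<bar> \<le> 2 * B * \<bar>h$1\<bar>"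
          unfolding y1_def
          by (rule step_lip[OF dirs(1)[OF cf] B hc1]) (use hc1[of 1] hc1[of 2] hc1[of 3] in \<open>auto simp: inbox_def axis_def\<close>)
        have st2: "\<bar>f y2 - f y1\<bar> \<le> 2 * B * \<bar>h$2\<bar>"
          unfolding y2_def
          by (rule step_lip[OF dirs(2)[OF cf] B hc1]) (use hc1[of 1] hc1[of 2] hc1[of 3] in \<open>auto simp: inbox_def axis_def y1_def\<close>)
        have st3: "\<bar>f q - f y2\<bar> \<le> 2 * B * \<bar>h$3\<bar>"
          unfolding qy
          by (rule step_lip[OF dirs(3)[OF cf] B hc1]) (use hc1[of 1] hc1[of 2] hc1[of 3] in \<open>auto simp: inbox_def axis_def y1_def y2_def\<close>)
        have "\<bar>f q - f p\<bar> \<le> 2 * B * (\<bar>h$1\<bar> + \<bar>h$2\<bar> + \<bar>h$3\<bar>)"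
          using st1 st2 st3 unfolding abs_le_iff distrib_left by linarith
        also have "\<dots> \<le> 2 * B * (3 * \<delta>)"
          using hc[of 1] hc[of 2] hc[of 3] B0 by (intro mult_left_mono) auto
        also have "\<dots> \<le> 6 * B * (\<epsilon> / (6 * B + 1))"
        proof -
          have "\<delta> \<le> \<epsilon> / (6 * B + 1)" by (simp add: \<delta>_def)
          then have "2 * B * (3 * \<delta>) \<le> 2 * B * (3 * (\<epsilon> / (6 * B + 1)))" using B0 by (intro mult_left_mono) auto
          then show ?thesis by simp
        qed
        also have "\<dots> < \<epsilon>"
        proof -
          have "6 * B * (\<epsilon> / (6 * B + 1)) = \<epsilon> * (6 * B / (6 * B + 1))" by simp
          also have "\<dots> < \<epsilon> * 1" using e B0 by (intro mult_strict_left_mono) auto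
          finally show ?thesis by simp
        qed
        finally show ?thesis by (simp add: dist_real_def)
      qed
      then show "\<exists>d>0. \<forall>x'. dist x' p < d \<longrightarrow> dist (f x') (f p) < \<epsilon>" using dpos by blast
    qed
  qed
  then show ?thesis by (simp add: continuous_on_eq_continuous_at)
qed


lemma lowdim_bounded:
  assumes "lowdim_el L E" shows "bounded E"
  using assms unfolding lowdim_el_def
proof (elim disjE)
  assume "point_el E" then show ?thesis by (auto simp: point_el_def)
next
  assume "hseg_el L E" then show ?thesis by (auto simp: hseg_el_def bounded_open_segment)
next
  assume "vseg_el L E" then show ?thesis by (auto simp: vseg_el_def bounded_open_segment)
next
  assume "htri_el L E"
  then obtain a b c where E: "E = rel_interior (convex hull {a, b, c})" by (auto simp: htri_el_def)
  have "bounded (convex hull {a,b,c})"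
    by (intro compact_imp_bounded compact_convex_hull finite_imp_compact) simp
  then show ?thesis unfolding E using rel_interior_subset bounded_subset by blast
next
  assume "vrect_el L E"
  then obtain p q h where h: "h > 0" and
    E: "E = {p + s *\<^sub>R (q - p) + t *\<^sub>R (h *\<^sub>R e3) | s t. 0 < s \<and> s < 1 \<and> 0 < t \<and> t < 1}"
    by (auto simp: vrect_el_def)
  have "E \<subseteq> cball 0 (norm p + norm (q - p) + norm (h *\<^sub>R e3))"
  proof
    fix z assume "z \<in> E"
    then obtain s t where st: "0 < s" "s < 1" "0 < t" "t < 1" and z: "z = p + s *\<^sub>R (q - p) + t *\<^sub>R (h *\<^sub>R e3)"
      unfolding E by blast
    have "norm z \<le> norm p + norm (s *\<^sub>R (q - p)) + norm (t *\<^sub>R (h *\<^sub>R e3))"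
      unfolding z by (intro order.trans[OF norm_triangle_ineq] add_mono norm_triangle_ineq order.refl)
    also have "\<dots> \<le> norm p + norm (q - p) + norm (h *\<^sub>R e3)"
    proof -
      have gen: "\<And>c (v::real^3). 0 \<le> c \<Longrightarrow> c \<le> 1 \<Longrightarrow> norm (c *\<^sub>R v) \<le> norm v"
        by (simp add: mult_left_le_one_le)
      show ?thesis using gen[of s "q - p"] gen[of t "h *\<^sub>R e3"] st by simp
    qed
    finally show "z \<in> cball 0 (norm p + norm (q - p) + norm (h *\<^sub>R e3))" by simp
  qed
  then show ?thesis using bounded_cball bounded_subset by blast
qed

lemma complex_compact:
  assumes "complex21 C" shows "compact C"
proof -
  obtain L where L: "finite L" "\<forall>E\<in>L. lowdim_el L E \<or> open_el L E" "C = \<Union>L" "closed C"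
    using assms by (auto simp: complex21_def)
  have "bounded E" if "E \<in> L" for E
    using L(2) that lowdim_bounded by (auto simp: open_el_def)
  then have "bounded C" using L by (auto intro: bounded_Union)
  then show ?thesis using L(4) by (simp add: compact_eq_bounded_closed)
qed

lemma argmax:
  fixes g :: "real^3 \<Rightarrow> real"
  assumes "compact S" "S \<noteq> {}" "continuous_on UNIV g"
  shows "\<exists>m. {y\<in>S. g y = m} \<noteq> {} \<and> compact {y\<in>S. g y = m} \<and> (\<forall>z\<in>S. g z \<le> m)"
proof -
  obtain x where x: "x \<in> S" "\<forall>y\<in>S. g y \<le> g x"
    using continuous_attains_sup[OF assms(1,2) continuous_on_subset[OF assms(3)]] by blast
  have "{y\<in>S. g y = g x} = S \<inter> {y. g y = g x}" by blast
  moreover have "closed {y. g y = g x}" by (rule closed_Collect_eq[OF assms(3) continuous_on_const])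
  ultimately have "compact {y\<in>S. g y = g x}" using compact_Int_closed assms(1) by metis
  then show ?thesis using x by blast
qed


lemma main_bound:
  assumes C: "complex21 C" and E: "Extr C \<subseteq> K" and fK: "finite K"
    and x: "x \<in> C" and cf: "convex21 f"
  shows "f x \<le> Sup (f ` K)"
proof -
  have cont: "continuous_on UNIV f" by (rule convex21_cont[OF cf])
  have cC: "compact C" by (rule complex_compact[OF C])
  obtain M where M1: "{y\<in>C. f y = M} \<noteq> {}" and M2: "compact {y\<in>C. f y = M}" and M3: "\<forall>z\<in>C. f z \<le> M"
    using argmax[OF cC _ cont] x by blast
  define A where "A = {y\<in>C. f y = M}"
  have c3: "continuous_on UNIV (\<lambda>y::real^3. y$3)" "continuous_on UNIV (\<lambda>y::real^3. y$1)"
     "continuous_on UNIV (\<lambda>y::real^3. y$2)"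
    by (intro continuous_on_component continuous_on_id)+
  obtain m3 where A1: "{y\<in>A. y$3 = m3} \<noteq> {}" "compact {y\<in>A. y$3 = m3}" "\<forall>z\<in>A. z$3 \<le> m3"
    using argmax[OF M2 M1 c3(1)] unfolding A_def by blast
  define A1 where "A1 = {y\<in>A. y$3 = m3}"
  obtain m1 where A2: "{y\<in>A1. y$1 = m1} \<noteq> {}" "compact {y\<in>A1. y$1 = m1}" "\<forall>z\<in>A1. z$1 \<le> m1"
    using argmax[OF A1(2,1) c3(2)] unfolding A1_def by blast
  define A2 where "A2 = {y\<in>A1. y$1 = m1}"
  obtain m2 where A3: "{y\<in>A2. y$2 = m2} \<noteq> {}" "\<forall>z\<in>A2. z$2 \<le> m2"
    using argmax[OF A2(2,1) c3(3)] unfolding A2_def by blast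
  obtain p where p: "p \<in> A2" "p$2 = m2" using A3(1) by blast
  have pC: "p \<in> C" and fp: "f p = M" and p3: "p$3 = m3" and p1: "p$1 = m1"
    using p by (auto simp: A2_def A1_def A_def)
  have "p \<in> Extr C"
  proof (rule ccontr)
    assume "p \<notin> Extr C"
    then obtain a b where ab: "hor_pair a b \<or> vert_pair a b" "open_segment a b \<subseteq> C" "p \<in> open_segment a b"
      using pC unfolding Extr_def by blast
    then obtain u where u: "a \<noteq> b" "0 < u" "u < 1" "p = (1 - u) *\<^sub>R a + u *\<^sub>R b"
      unfolding in_segment by blast
    define d where "d = b - a"
    define \<epsilon> where "\<epsilon> = min u (1 - u) / 2"
    have ep: "\<epsilon> > 0" "u + \<epsilon> < 1" "0 < u - \<epsilon>" using u(2,3) by (auto simp: \<epsilon>_def min_def field_simps)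
    have inseg: "p + c *\<^sub>R d \<in> C" if "0 < u + c" "u + c < 1" for c
    proof -
      have "p + c *\<^sub>R d = (1 - (u + c)) *\<^sub>R a + (u + c) *\<^sub>R b"
        unfolding u(4) d_def by (simp add: algebra_simps)
      then have "p + c *\<^sub>R d \<in> open_segment a b" unfolding in_segment using u(1) that by blast
      then show ?thesis using ab(2) by blast
    qed
    have Pp: "p + \<epsilon> *\<^sub>R d \<in> C" using inseg ep by auto
    have Pm: "p + (-\<epsilon>) *\<^sub>R d \<in> C" by (rule inseg) (use ep in auto)
    have dd: "d$3 = 0 \<or> (d$1 = 0 \<and> d$2 = 0)" using ab(1) by (auto simp: hor_pair_def vert_pair_def d_def)
    have dc: "dirconv f (\<epsilon> *\<^sub>R d)" using convex21_dirconv[OF cf dd] dirconv_scale by blast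
    have mid: "f ((p + (-\<epsilon>) *\<^sub>R d) + \<epsilon> *\<^sub>R d) \<le> (f (p + (-\<epsilon>) *\<^sub>R d) + f ((p + (-\<epsilon>) *\<^sub>R d) + 2 *\<^sub>R (\<epsilon> *\<^sub>R d))) / 2"
      by (rule dirconv_mid[OF dc])
    have e1: "(p + (-\<epsilon>) *\<^sub>R d) + \<epsilon> *\<^sub>R d = p" by simp
    have e2: "(p + (-\<epsilon>) *\<^sub>R d) + 2 *\<^sub>R (\<epsilon> *\<^sub>R d) = p + \<epsilon> *\<^sub>R d"
      by (simp only: scaleR_scaleR addsc) simp
    have "M \<le> (f (p + (-\<epsilon>) *\<^sub>R d) + f (p + \<epsilon> *\<^sub>R d)) / 2" using mid unfolding e1 e2 fp .
    moreover have "f (p + (-\<epsilon>) *\<^sub>R d) \<le> M" "f (p + \<epsilon> *\<^sub>R d) \<le> M" using M3 Pp Pm by auto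
    ultimately have fPm: "f (p + (-\<epsilon>) *\<^sub>R d) = M" and fPp: "f (p + \<epsilon> *\<^sub>R d) = M"
      by (simp_all only: field_simps)
    have inA: "p + \<epsilon> *\<^sub>R d \<in> A" "p + (-\<epsilon>) *\<^sub>R d \<in> A" using fPm fPp Pp Pm by (auto simp: A_def)
    then have "p$3 + \<epsilon> * d$3 \<le> m3" "p$3 - \<epsilon> * d$3 \<le> m3" using A1(3) by fastforce+
    then have "\<epsilon> * d$3 = 0" using p3 by linarith
    then have d3: "d$3 = 0" using ep by simp
    have inA1: "p + \<epsilon> *\<^sub>R d \<in> A1" "p + (-\<epsilon>) *\<^sub>R d \<in> A1" using inA d3 p3 by (auto simp: A1_def)
    then have "p$1 + \<epsilon> * d$1 \<le> m1" "p$1 - \<epsilon> * d$1 \<le> m1" using A2(3) by fastforce+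
    then have "\<epsilon> * d$1 = 0" using p1 by linarith
    then have d1: "d$1 = 0" using ep by simp
    have inA2: "p + \<epsilon> *\<^sub>R d \<in> A2" "p + (-\<epsilon>) *\<^sub>R d \<in> A2" using inA1 d1 p1 by (auto simp: A2_def)
    then have "p$2 + \<epsilon> * d$2 \<le> m2" "p$2 - \<epsilon> * d$2 \<le> m2" using A3(2) by fastforce+
    then have "\<epsilon> * d$2 = 0" using p(2) by linarith
    then have d2: "d$2 = 0" using ep by simp
    have "d = 0" using d1 d2 d3 by (simp add: vec_eq_iff forall_3)
    then show False using u(1) by (simp add: d_def)
  qed
  then have "p \<in> K" using E by blast
  then have "f p \<le> Sup (f ` K)" using fK by (intro cSup_upper) auto
  moreover have "f x \<le> f p" using M3 x fp by auto
  ultimately show ?thesis by linarith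
qed

theorem lemma2p6:
  fixes K :: "(real^3) set"
  assumes "finite K"
  shows "Kcc K \<subseteq> Krc K"
proof
  fix x assume "x \<in> Kcc K"
  then obtain C where "complex21 C" "Extr C \<subseteq> K" "x \<in> C" unfolding Kcc_def by blast
  then show "x \<in> Krc K" unfolding Krc_def using main_bound assms by blast
qed

end
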